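(* Let $m\ge1$ and let $\mathbf z=(z_1,\dots,z_m)$ be a sequence of non-negative integers with at most one even entry. Then $\rho^{m+1}(\mathbf z)=(z_1+2,\dots,z_m+2)$, where $\rho=\rho_m$ is the right rotation.
   Context: Let $\mathcal Z_m$ be the set of $m$-tuples of integers with at most one even entry. The right rotation $\rho:\mathcal Z_m\to\mathcal Z_m$ is defined by: if $z_2,\dots,z_m$ are all odd, $\rho(z_1,\dots,z_m)=(z_2,\dots,z_m,z_1+1)$; if $z_v$ is even for some $v>1$, $\rho(z_1,\dots,z_m)=(z_2,\dots,z_{v-1},z_1+1,z_{v+1},\dots,z_m,z_v+1)$ (i.e. the entry $z_1+1$ is placed at position $v-1$ and $z_v+1$ at the end). For $m=1$, $\rho(z)=z+1$. *)

theory Defs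
  imports Main
begin

definition Zset :: "nat \<Rightarrow> int list set" where
  "Zset m = {z. length z = m \<and> card {i. i < m \<and> even (z ! i)} \<le> 1}"

text \<open>For z = z1 # rest: if all entries of rest are odd,
  the result is rest @ [z1+1]; otherwise, with j the (0-based) index in rest of
  the even entry z_v (v = j + 2), z1+1 is placed at position v-1 and z_v+1 at the end.\<close>

fun rho :: "int list \<Rightarrow> int list" where
  "rho [] = []"
| "rho (z1 # rest) =
     (if (\<forall>x\<in>set rest. odd x) then rest @ [z1 + 1]
      else (let j = (LEAST j. j < length rest \<and> even (rest ! j))
            in take j rest @ [z1 + 1] @ drop (Suc j) rest @ [rest ! j + 1]))"

end

theory Submission
  imports Defs
begin

lemma L_odd: "\<forall>y\<in>set rest. odd y \<Longrightarrow> rho (x # rest) = rest @ [x+1]"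
  by simp

lemma L_even:
  assumes "\<forall>y\<in>set xs. odd y" "even e"
  shows "rho (x # xs @ e # ys) = xs @ [x+1] @ ys @ [e+1]"
proof -
  have ne: "\<not> (\<forall>y\<in>set (xs @ e # ys). odd y)" using assms by auto
  have L: "(LEAST j. j < length (xs @ e # ys) \<and> even ((xs @ e # ys) ! j)) = length xs"
  proof (rule Least_equality)
    show "length xs < length (xs @ e # ys) \<and> even ((xs @ e # ys) ! length xs)" using assms by simp
  next
    fix j assume "j < length (xs @ e # ys) \<and> even ((xs @ e # ys) ! j)"
    then show "length xs \<le> j" using assms
      by (metis leI nth_append nth_mem)
  qed
  show ?thesis using ne by (simp only: rho.simps if_False Let_def L) simp
qed

lemma P:
  assumes "\<forall>y\<in>set as. odd y" "odd x" "\<forall>y\<in>set ps. odd y" "\<forall>y\<in>set ys. odd y" "even e"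
  shows "(rho ^^ Suc (length as)) ((as @ [x]) @ ps @ [e] @ ys) = ps @ [x+1] @ ys @ [e+1] @ map (\<lambda>x. x + 2) as"
  using assms
proof (induction as arbitrary: e ys)
  case Nil
  then show ?case using L_even[of ps e x ys] by simp
next
  case (Cons a as)
  have "rho ((a # as @ [x]) @ ps @ [e] @ ys) = (as @ [x]) @ ps @ [a+1] @ (ys @ [e+1])"
  proof -
    have o: "\<forall>y\<in>set (as @ [x] @ ps). odd y" using Cons.prems by auto
    show ?thesis using L_even[OF o Cons.prems(5), of a ys] by simp
  qed
  moreover have "(rho ^^ Suc (length as)) ((as @ [x]) @ ps @ [a+1] @ (ys @ [e+1]))
      = ps @ [x+1] @ (ys @ [e+1]) @ [a+1+1] @ map (\<lambda>x. x + 2) as"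
    using Cons by simp
  ultimately show ?case by (simp only: funpow_Suc_right o_apply length_Cons) simp
qed

lemma C:
  assumes "\<forall>y\<in>set (ys @ [c] @ R). odd y"
  shows "(rho ^^ Suc (length ys)) (ys @ [c] @ R) = R @ [c+1] @ map (\<lambda>x. x + 2) ys"
proof (cases ys)
  case Nil
  then show ?thesis using assms by simp
next
  case (Cons y1 ys2)
  have r: "rho (ys @ [c] @ R) = (ys2 @ [c]) @ R @ [y1+1] @ []"
    using assms Cons by simp
  have "(rho ^^ Suc (length ys2)) ((ys2 @ [c]) @ R @ [y1+1] @ []) = R @ [c+1] @ [] @ [y1+1+1] @ map (\<lambda>x. x + 2) ys2"
    by (rule P) (use assms Cons in auto)
  then show ?thesis using r Cons by (simp only: funpow_Suc_right o_apply length_Cons) simp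
qed

theorem lemma4p4:
  fixes m :: nat and z :: "int list"
  assumes "m \<ge> 1"
    and "z \<in> Zset m"
    and "\<forall>i<m. z ! i \<ge> 0"
  shows "(rho ^^ (m + 1)) z = map (\<lambda>x. x + 2) z"
proof -
  have len: "length z = m" and cd: "card {i. i < m \<and> even (z ! i)} \<le> 1"
    using assms(2) unfolding Zset_def by auto
  show ?thesis
  proof (cases "\<forall>y\<in>set z. odd y")
    case True
    obtain x1 rest where z: "z = x1 # rest" using len assms(1) by (cases z) auto
    show ?thesis
    proof (cases rest rule: rev_cases)
      case Nil
      then have "m = 1" using z len by simp
      then show ?thesis using z Nil True by (simp add: numeral_2_eq_2)
    next
      case (snoc ws w)
      have r1: "rho z = (ws @ [w]) @ [] @ [x1+1] @ []" using True z snoc by simp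
      have "(rho ^^ Suc (length ws)) ((ws @ [w]) @ [] @ [x1+1] @ []) = [] @ [w+1] @ [] @ [x1+1+1] @ map (\<lambda>x. x + 2) ws"
        by (rule P) (use True z snoc in auto)
      hence r2: "(rho ^^ (Suc (length ws))) (rho z) = (w+1) # (x1+2) # map (\<lambda>x. x + 2) ws" using r1 by simp
      have r3: "rho ((w+1) # (x1+2) # map (\<lambda>x. x + 2) ws) = (x1+2) # map (\<lambda>x. x + 2) ws @ [w+2]"
        using True z snoc by simp
      have m: "m + 1 = Suc (Suc (Suc (length ws)))" using len z snoc by simp
      have "(rho ^^ Suc (Suc (Suc (length ws)))) z = rho ((rho ^^ Suc (length ws)) (rho z))"
        by (subst funpow.simps(2), subst funpow_Suc_right, simp only: o_apply)
      also have "\<dots> = (x1+2) # map (\<lambda>x. x + 2) ws @ [w+2]" using r2 r3 by simp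
      finally show ?thesis unfolding m using z snoc by simp
    qed
  next
    case False
    then obtain i where i: "i < m" "even (z ! i)" using len by (auto simp: in_set_conv_nth)
    have uniq: "odd (z ! j)" if "j < m" "j \<noteq> i" for j
    proof (rule ccontr)
      assume "\<not> odd (z ! j)"
      hence "{i, j} \<subseteq> {i. i < m \<and> even (z ! i)}" using i that by auto
      hence "card {i, j} \<le> card {i. i < m \<and> even (z ! i)}" by (intro card_mono) auto
      with cd that show False by simp
    qed
    define xs where "xs = take i z"
    define e where "e = z ! i"
    define ys where "ys = drop (Suc i) z"
    have z: "z = xs @ [e] @ ys" unfolding xs_def e_def ys_def using i len
      by (simp add: id_take_nth_drop)
    have oxs: "\<forall>y\<in>set xs. odd y" unfolding xs_def using uniq i len
      by (auto simp: in_set_conv_nth)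
    have oys: "\<forall>y\<in>set ys. odd y" unfolding ys_def using uniq i len
      by (auto simp: in_set_conv_nth)
    have ee: "even e" using i e_def by simp
    show ?thesis
    proof (cases xs rule: rev_cases)
      case Nil
      have r1: "rho z = ys @ [e+1]" using z Nil oys by simp
      show ?thesis
      proof (cases ys)
        case Nil2: Nil
        then have "m = 1" using z Nil len by simp
        then show ?thesis using z Nil Nil2 ee by (simp add: numeral_2_eq_2)
      next
        case (Cons y1 ys')
        have r2: "rho (ys @ [e+1]) = (ys' @ [e+1]) @ [] @ [y1+1] @ []" using Cons oys ee by simp
        have "(rho ^^ Suc (length ys')) ((ys' @ [e+1]) @ [] @ [y1+1] @ []) = [] @ [e+1+1] @ [] @ [y1+1+1] @ map (\<lambda>x. x + 2) ys'"
          by (rule P) (use Cons oys ee in auto)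
        moreover have m: "m + 1 = Suc (Suc (Suc (length ys')))" using len z Nil Cons by simp
        ultimately show ?thesis using r1 r2 z Nil Cons
          by (simp only: funpow_Suc_right o_apply) simp
      qed
    next
      case (snoc xs' x)
      have r1: "(rho ^^ Suc (length xs')) ((xs' @ [x]) @ [] @ [e] @ ys) = [] @ [x+1] @ ys @ [e+1] @ map (\<lambda>x. x + 2) xs'"
        by (rule P) (use oxs oys ee snoc in auto)
      have r2: "rho ((x+1) # ys @ [e+1] @ map (\<lambda>x. x + 2) xs') = ys @ [e+1] @ (map (\<lambda>x. x + 2) xs' @ [x+2])"
      proof -
        have "\<forall>y\<in>set (ys @ [e+1] @ map (\<lambda>x. x + 2) xs'). odd y" using oxs oys ee snoc by auto
        from L_odd[OF this, of "x+1"] show ?thesis by simp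
      qed
      have r3: "(rho ^^ Suc (length ys)) (ys @ [e+1] @ (map (\<lambda>x. x + 2) xs' @ [x+2]))
          = (map (\<lambda>x. x + 2) xs' @ [x+2]) @ [e+1+1] @ map (\<lambda>x. x + 2) ys"
        by (rule C) (use oxs oys ee snoc in auto)
      have m: "m + 1 = Suc (length ys) + (Suc 0 + Suc (length xs'))" using len z snoc by simp
      show ?thesis unfolding m funpow_add o_apply using r1 r2 r3 z snoc by simp
    qed
  qed
qed

end
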